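(* Let $m, n$ be positive integers with $m \mid n$, let $N < 2^n$ be an odd positive integer, and let $x < 2^m$ be a positive integer. Write $x = 2^t x'$ with $t \ge 0$ and $x'$ odd. Let $x_{\mathrm{minv}}$ be the inverse of $x'$ modulo $2^m$, set $z_0 = 0$ and for $j = 0, 1, \ldots, \frac{n-2m}{m}$ define $N_j = \lfloor N/2^{jm}\rfloor \bmod 2^m$, $\mathsf{ctrl}_j = [x_{\mathrm{minv}}(N_j - z_j)] \bmod 2^m \in [0,2^m-1]$, $z'_j = z_j + \mathsf{ctrl}_j\cdot x'$, $z_{j+1} = \lfloor z'_j/2^m\rfloor$. Let $z = z_{(n-m)/m}$, $s = \lfloor N/2^{n-m}\rfloor - z$, and $$\mathsf{out} = \left((-1)^{\frac{N^2-1}{8}}\right)^{t}\cdot (-1)^{\frac{(x'-1)(N-1)}{4}}\cdot\left((-1)^{\frac{x'^2-1}{8}}\right)^{n-m}\cdot\left(\frac{s}{x'}\right).$$ Then $\mathsf{out} = \left(\frac{x}{N}\right)$, and moreover $|s| < 2^m$.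
   Context: $\left(\frac{a}{b}\right)$ denotes the Jacobi symbol, defined for any integer $a$ (possibly negative) and odd positive integer $b = p_1^{e_1}\cdots p_k^{e_k}$ by $\left(\frac{a}{b}\right) = \prod_i \left(\frac{a}{p_i}\right)^{e_i}$, where the Legendre symbol $\left(\frac{a}{p}\right)$ is $0$ if $p\mid a$, $1$ if $a$ is a nonzero quadratic residue mod $p$, and $-1$ otherwise. *)

theory Defs
  imports "HOL-Number_Theory.Number_Theory"
begin

definition Jacobi :: "int \<Rightarrow> int \<Rightarrow> int" where
  "Jacobi a b = (\<Prod>p\<in>prime_factors (nat b). Legendre a (int p) ^ multiplicity p (nat b))"

end

theory Submission
  imports Defs
begin


lemma small_cong_eq:
  fixes x y :: int and p :: nat
  assumes "x \<in> {-1,0,1}" "y \<in> {-1,0,1}" "[x = y] (mod int p)" "2 < p"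
  shows "x = y"
proof (rule ccontr)
  assume ne: "x \<noteq> y"
  have "int p dvd (x - y)" using assms(3) by (simp add: cong_iff_dvd_diff)
  then have "\<bar>int p\<bar> \<le> \<bar>x - y\<bar>" using ne by (intro dvd_imp_le_int) auto
  moreover have "\<bar>x - y\<bar> \<le> 2" using assms(1,2) by auto
  ultimately show False using assms(4) by simp
qed

lemma Legendre_range: "Legendre a p \<in> {-1,0,1}"
  by (auto simp: Legendre_def)

lemma Legendre_mult:
  assumes "prime p" "2 < p"
  shows "Legendre (a*b) (int p) = Legendre a (int p) * Legendre b (int p)"
proof -
  have "[Legendre (a*b) (int p) = (a*b) ^ ((p - 1) div 2)] (mod int p)"
    using euler_criterion assms by blast
  moreover have "[Legendre a (int p) * Legendre b (int p) = a ^ ((p - 1) div 2) * b ^ ((p - 1) div 2)] (mod int p)"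
    using euler_criterion assms cong_mult by blast
  ultimately have "[Legendre (a*b) (int p) = Legendre a (int p) * Legendre b (int p)] (mod int p)"
    by (metis cong_sym cong_trans power_mult_distrib)
  moreover have "Legendre a (int p) * Legendre b (int p) \<in> {-1,0,1}"
    using Legendre_range[of a "int p"] Legendre_range[of b "int p"] by auto
  ultimately show ?thesis using small_cong_eq Legendre_range assms(2) by blast
qed

lemma Legendre_cong:
  assumes "[a = b] (mod p)"
  shows "Legendre a p = Legendre b p"
proof -
  have "[y^2 = a] (mod p) \<longleftrightarrow> [y^2 = b] (mod p)" for y
    using cong_trans[of "y^2" a p b] cong_trans[of "y^2" b p a] cong_sym[OF assms] assms by blast
  then have "QuadRes p a = QuadRes p b" unfolding QuadRes_def by simp
  moreover have "[a = 0] (mod p) = [b = 0] (mod p)"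
    using cong_trans[of a b p 0] cong_trans[of b a p 0] cong_sym[OF assms] assms by blast
  ultimately show ?thesis by (simp add: Legendre_def)
qed

lemma Legendre_one:
  assumes "prime p" shows "Legendre 1 (int p) = 1"
proof -
  have "\<not> [1 = 0] (mod int p)" using assms
    using prime_gt_1_nat[OF assms] by (simp add: cong_0_iff)
  moreover have "QuadRes (int p) 1" unfolding QuadRes_def by (rule exI[of _ 1]) simp
  ultimately show ?thesis by (simp add: Legendre_def)
qed

lemma sq_parity:
  fixes h :: nat
  shows "even (h - h div 2) = even (h * (h+1) div 2)"
proof -
  define k r where "k = h div 4" and "r = h mod 4"
  have h: "h = 4*k + r" "r < 4" unfolding k_def r_def by simp_all
  consider "r = 0" | "r = 1" | "r = 2" | "r = 3" using h(2) by linarith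
  then show ?thesis
  proof cases
    case 1
    then have "h * (h+1) div 2 = 2 * (k * (4*k+1))" using h by (simp add: algebra_simps)
    moreover have "h - h div 2 = 2 * k" using h 1 by simp
    ultimately show ?thesis by simp
  next
    case 2
    then have "h * (h+1) div 2 = (4*k+1) * (2*k+1)" using h by (simp add: algebra_simps)
    moreover have "h - h div 2 = 2 * k + 1" using h 2 by simp
    ultimately show ?thesis by simp
  next
    case 3
    then have "h * (h+1) div 2 = (2*k+1) * (4*k+3)" using h by (simp add: algebra_simps)
    moreover have "h - h div 2 = 2 * k + 1" using h 3 by simp
    ultimately show ?thesis by simp
  next
    case 4
    then have "h * (h+1) div 2 = (4*k+3) * (2*k+2)" using h by (simp add: algebra_simps)
    moreover have "h - h div 2 = 2 * k + 2" using h 4 by simp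
    ultimately show ?thesis by simp
  qed
qed

lemma Legendre_two:
  assumes "prime p" "2 < p"
  shows "Legendre 2 (int p) = (-1) ^ ((p^2 - 1) div 8)"
proof -
  have nd: "[2 \<noteq> 0] (mod int p)"
  proof
    assume "[2 = 0] (mod int p)"
    then have "int p dvd 2" by (simp add: cong_0_iff)
    then have "p dvd 2" by presburger
    then show False using assms by (simp add: nat_dvd_not_less)
  qed
  interpret G: GAUSS p 2 using assms nd by unfold_locales auto
  define h where "h = (int p - 1) div 2"
  have p2: "int p = 2*h + 1" using G.p_eq2 h_def by simp
  have E: "G.E = (\<lambda>x. 2*x) ` {h div 2 + 1 .. h}"
  proof -
    have "G.E = {y. \<exists>x. 0 < x \<and> x \<le> h \<and> y = 2*x \<and> h < y}"
      unfolding G.E_def G.C_def G.B_def G.A_def h_def[symmetric]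
    proof (rule equalityI; rule subsetI)
      fix y assume "y \<in> (\<lambda>x. x mod int p) ` (\<lambda>x. x * 2) ` {0<..h} \<inter> {h<..}"
      then obtain x where "0 < x" "x \<le> h" "y = (x*2) mod int p" "h < y" by auto
      moreover have "(x*2) mod int p = 2*x" using \<open>0 < x\<close> \<open>x \<le> h\<close> p2 by simp
      ultimately show "y \<in> {y. \<exists>x. 0 < x \<and> x \<le> h \<and> y = 2*x \<and> h < y}" by auto
    next
      fix y assume "y \<in> {y. \<exists>x. 0 < x \<and> x \<le> h \<and> y = 2*x \<and> h < y}"
      then obtain x where x: "0 < x" "x \<le> h" "y = 2*x" "h < y" by auto
      have "(x*2) mod int p = 2*x" using x p2 by simp
      have "x*2 \<in> (\<lambda>x. x * 2) ` {0<..h}" using x by auto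
      then have "(x*2) mod int p \<in> (\<lambda>x. x mod int p) ` (\<lambda>x. x * 2) ` {0<..h}" by (rule imageI)
      with x \<open>(x*2) mod int p = 2*x\<close> show "y \<in> (\<lambda>x. x mod int p) ` (\<lambda>x. x * 2) ` {0<..h} \<inter> {h<..}"
        by simp
    qed
    also have "\<dots> = (\<lambda>x. 2*x) ` {h div 2 + 1 .. h}"
    proof (rule equalityI; rule subsetI)
      fix y assume "y \<in> {y. \<exists>x. 0 < x \<and> x \<le> h \<and> y = 2*x \<and> h < y}"
      then obtain x where x: "0 < x" "x \<le> h" "y = 2*x" "h < y" by auto
      then have "x \<in> {h div 2 + 1 .. h}" by auto
      then show "y \<in> (\<lambda>x. 2*x) ` {h div 2 + 1 .. h}" using x(3) by blast
    next
      fix y assume "y \<in> (\<lambda>x. 2*x) ` {h div 2 + 1 .. h}"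
      then obtain x where x: "x \<in> {h div 2 + 1 .. h}" "y = 2*x" by blast
      have "0 \<le> h" using p2 by simp
      then show "y \<in> {y. \<exists>x. 0 < x \<and> x \<le> h \<and> y = 2*x \<and> h < y}" using x by auto
    qed
    finally show ?thesis .
  qed
  have "card G.E = nat (h - h div 2)"
    unfolding E by (subst card_image) (auto simp: inj_on_def)
  also have "\<dots> = nat h - nat h div 2" using p2 by (simp add: nat_div_distrib) 
  finally have cE: "card G.E = nat h - nat h div 2" .
  have hp: "p = 2 * nat h + 1" using p2 by linarith
  have "(p^2 - 1) div 8 = nat h * (nat h + 1) div 2"
    unfolding hp by (simp add: power2_eq_square algebra_simps) 
  then have "even ((p^2 - 1) div 8) = even (card G.E)" using cE sq_parity by simp
  then have "(-1::int) ^ ((p^2 - 1) div 8) = (-1) ^ card G.E"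
    by (metis neg_one_even_power neg_one_odd_power)
  then show ?thesis using G.gauss_lemma by simp
qed



lemma Jacobi_nat: "Jacobi a (int b) = (\<Prod>p\<in>prime_factors b. Legendre a (int p) ^ multiplicity p b)"
  by (simp add: Jacobi_def)

lemma Jacobi_1 [simp]: "Jacobi a 1 = 1"
  by (simp add: Jacobi_def)

lemma Jacobi_prime: "prime p \<Longrightarrow> Jacobi a (int p) = Legendre a (int p)"
  by (simp add: Jacobi_nat prime_prime_factors multiplicity_self)

lemma mult_0_notin:
  fixes b :: nat
  assumes "i \<in> prime_factors c" "i \<notin> prime_factors b" "b > 0"
  shows "multiplicity i b = 0"
proof -
  have "prime i" using assms(1) by auto
  then have "\<not> i dvd b" using assms(2,3) by (auto simp: in_prime_factors_iff)
  then show ?thesis by (rule not_dvd_imp_multiplicity_0)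
qed

lemma Jacobi_mult_right:
  assumes "b > 0" "c > 0"
  shows "Jacobi a (int b * int c) = Jacobi a (int b) * Jacobi a (int c)"
proof -
  let ?U = "prime_factors b \<union> prime_factors c"
  let ?L = "\<lambda>p. Legendre a (int p)"
  have fin: "finite ?U" by simp
  have "Jacobi a (int b * int c) = Jacobi a (int (b*c))" by simp
  also have "\<dots> = (\<Prod>p\<in>?U. ?L p ^ multiplicity p (b*c))"
    unfolding Jacobi_nat using assms by (simp add: prime_factors_product)
  also have "\<dots> = (\<Prod>p\<in>?U. ?L p ^ multiplicity p b * ?L p ^ multiplicity p c)"
  proof (intro prod.cong refl)
    fix p assume "p \<in> ?U"
    then have "prime p" by auto
    then show "?L p ^ multiplicity p (b*c) = ?L p ^ multiplicity p b * ?L p ^ multiplicity p c"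
      using assms by (simp add: prime_elem_multiplicity_mult_distrib power_add)
  qed
  also have "\<dots> = (\<Prod>p\<in>?U. ?L p ^ multiplicity p b) * (\<Prod>p\<in>?U. ?L p ^ multiplicity p c)"
    by (rule prod.distrib)
  also have "(\<Prod>p\<in>?U. ?L p ^ multiplicity p b) = Jacobi a (int b)"
    unfolding Jacobi_nat
    by (rule prod.mono_neutral_right) (use assms mult_0_notin in auto)
  also have "(\<Prod>p\<in>?U. ?L p ^ multiplicity p c) = Jacobi a (int c)"
    unfolding Jacobi_nat
    by (rule prod.mono_neutral_right) (use assms mult_0_notin in auto)
  finally show ?thesis .
qed

lemma odd_induct [consumes 1, case_names one prime mult]:
  fixes n :: nat
  assumes "odd n"
    and "P 1"
    and "\<And>p. prime p \<Longrightarrow> 2 < p \<Longrightarrow> P p"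
    and "\<And>a b. odd a \<Longrightarrow> odd b \<Longrightarrow> 0 < a \<Longrightarrow> 0 < b \<Longrightarrow> P a \<Longrightarrow> P b \<Longrightarrow> P (a*b)"
  shows "P n"
  using assms(1)
proof (induction n rule: less_induct)
  case (less n)
  show ?case
  proof (cases "n = 1")
    case True then show ?thesis using assms(2) by simp
  next
    case False
    then obtain p where p: "prime p" "p dvd n" using prime_factor_nat by blast
    then obtain q where q: "n = p * q" by blast
    have "odd p" "odd q" using less.prems q by auto
    then have p2: "2 < p" using p prime_ge_2_nat[of p] by (cases "p = 2") auto
    have "n > 0" using less.prems by (cases n) auto
    then have q0: "q > 0" using q by (cases q) auto
    have "q < n" using q p2 q0 by simp
    then have "P q" using less.IH \<open>odd q\<close> by blast
    moreover have "P p" using assms(3) p p2 by blast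
    ultimately show ?thesis using assms(4)[of p q] q \<open>odd p\<close> \<open>odd q\<close> q0 p2 by simp
  qed
qed

lemma Jacobi_mult_left:
  assumes "odd b"
  shows "Jacobi (a*c) (int b) = Jacobi a (int b) * Jacobi c (int b)"
  using assms
proof (induction b rule: odd_induct)
  case one then show ?case by simp
next
  case (prime p) then show ?case by (simp add: Jacobi_prime Legendre_mult)
next
  case (mult x y) then show ?case by (simp add: Jacobi_mult_right)
qed

lemma Jacobi_cong:
  assumes "odd b" "[a = c] (mod int b)"
  shows "Jacobi a (int b) = Jacobi c (int b)"
  using assms
proof (induction b arbitrary: rule: odd_induct)
  case one then show ?case by simp
next
  case (prime p) then show ?case by (simp add: Jacobi_prime Legendre_cong)
next
  case (mult x y)
  have "[a = c] (mod int x)" "[a = c] (mod int y)" using mult.prems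
    by (auto intro: cong_dvd_modulus)
  then show ?case using mult by (simp add: Jacobi_mult_right)
qed

lemma Jacobi_one_left:
  assumes "odd b" shows "Jacobi 1 (int b) = 1"
  using assms
proof (induction b rule: odd_induct)
  case one then show ?case by simp
next
  case (prime p) then show ?case by (simp add: Jacobi_prime Legendre_one)
next
  case (mult x y) then show ?case by (simp add: Jacobi_mult_right)
qed

lemma Jacobi_power_left:
  assumes "odd b" shows "Jacobi (a ^ k) (int b) = Jacobi a (int b) ^ k"
  using assms by (induction k) (simp_all add: Jacobi_one_left Jacobi_mult_left)

lemma two_exp_mult:
  fixes a b :: nat
  assumes "odd a" "odd b"
  shows "(-1::int) ^ (((a*b)^2 - 1) div 8) = (-1) ^ ((a^2 - 1) div 8) * (-1) ^ ((b^2 - 1) div 8)"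
proof -
  have "8 dvd (a^2 - 1)" using assms(1)
  proof -
    obtain k where "a = 2*k+1" using assms(1) oddE by blast
    moreover obtain j where "k*(k+1) = 2*j" using evenE[of "k*(k+1)"] by auto
    ultimately have "a^2 - 1 = 8 * j" by (simp add: power2_eq_square algebra_simps)
    then show ?thesis by simp
  qed
  then obtain A where A: "a^2 - 1 = 8*A" by blast
  have "8 dvd (b^2 - 1)" using assms(2)
  proof -
    obtain k where "b = 2*k+1" using assms(2) oddE by blast
    moreover obtain j where "k*(k+1) = 2*j" using evenE[of "k*(k+1)"] by auto
    ultimately have "b^2 - 1 = 8 * j" by (simp add: power2_eq_square algebra_simps)
    then show ?thesis by simp
  qed
  then obtain B where B: "b^2 - 1 = 8*B" by blast
  have "a^2 \<ge> 1" "b^2 \<ge> 1" using assms by (auto intro!: one_le_power simp: Suc_le_eq odd_pos)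
  then have a1: "a^2 = 8*A + 1" and b1: "b^2 = 8*B + 1" using A B by linarith+
  have "(a*b)^2 = 8*(8*A*B + A + B) + 1" by (simp add: power_mult_distrib a1 b1 algebra_simps)
  then have "((a*b)^2 - 1) div 8 = 2*(4*A*B) + (A + B)" by simp
  then show ?thesis using A B by (simp add: power_add power_mult)
qed

lemma Jacobi_two:
  assumes "odd b" shows "Jacobi 2 (int b) = (-1) ^ ((b^2 - 1) div 8)"
  using assms
proof (induction b rule: odd_induct)
  case one then show ?case by simp
next
  case (prime p) then show ?case by (simp add: Jacobi_prime Legendre_two)
next
  case (mult x y) then show ?case using two_exp_mult[of x y] by (simp add: Jacobi_mult_right)
qed



definition sgn_qr :: "nat \<Rightarrow> nat \<Rightarrow> int" where
  "sgn_qr a b = (-1) ^ (((a - 1) div 2) * ((b - 1) div 2))"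

lemma sgn_qr_comm: "sgn_qr a b = sgn_qr b a"
  by (simp add: sgn_qr_def mult.commute)

lemma sgn_qr_mult:
  assumes "odd a" "odd b"
  shows "sgn_qr (a*b) c = sgn_qr a c * sgn_qr b c"
proof -
  obtain A where A: "a = 2*A+1" using assms(1) oddE by blast
  obtain B where B: "b = 2*B+1" using assms(2) oddE by blast
  have "a*b = 2*(2*A*B + A + B) + 1" using A B by (simp add: algebra_simps)
  then have "(a*b - 1) div 2 = 2*A*B + A + B" by simp
  then have "((a*b - 1) div 2) * ((c-1) div 2) = 2*(A*B*((c-1) div 2)) + A*((c-1) div 2) + B*((c-1) div 2)"
    by (simp add: algebra_simps)
  moreover have "(a - 1) div 2 = A" "(b - 1) div 2 = B" using A B by simp_all
  ultimately show ?thesis unfolding sgn_qr_def by (simp add: power_add power_mult)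
qed

lemma Legendre_recip:
  assumes "prime p" "2 < p" "prime q" "2 < q"
  shows "Legendre (int p) (int q) = sgn_qr p q * Legendre (int q) (int p)"
proof (cases "p = q")
  case True
  have "[int q = 0] (mod int q)" by (simp add: cong_0_iff)
  then show ?thesis using True by (simp add: Legendre_def)
next
  case False
  have "Legendre (int p) (int q) * Legendre (int q) (int p) = sgn_qr p q"
    using Quadratic_Reciprocity[OF assms False] by (simp add: sgn_qr_def)
  moreover have "\<not> [int q = 0] (mod int p)"
  proof
    assume "[int q = 0] (mod int p)"
    then have "p dvd q" by (simp add: cong_0_iff)
    then show False using assms False by (simp add: primes_dvd_imp_eq)
  qed
  then have "Legendre (int q) (int p) ^ 2 = 1" by (auto simp: Legendre_def)
  ultimately show ?thesis
    by (metis mult.assoc mult.commute mult_1 power2_eq_square)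
qed

lemma Jacobi_recip_prime:
  assumes "prime p" "2 < p" "odd b"
  shows "Jacobi (int p) (int b) = sgn_qr p b * Jacobi (int b) (int p)"
  using assms(3)
proof (induction b rule: odd_induct)
  case one then show ?case using assms by (simp add: Jacobi_prime Legendre_one sgn_qr_def)
next
  case (prime q) then show ?case using Legendre_recip[OF assms(1,2) prime(1,2)] assms by (simp add: Jacobi_prime)
next
  case (mult x y)
  have "Jacobi (int p) (int (x*y)) = Jacobi (int p) (int x) * Jacobi (int p) (int y)"
    using mult by (simp add: Jacobi_mult_right)
  also have "\<dots> = sgn_qr p x * sgn_qr p y * (Jacobi (int x) (int p) * Jacobi (int y) (int p))"
    using mult by simp
  also have "\<dots> = sgn_qr p (x*y) * Jacobi (int (x*y)) (int p)"
    using mult assms sgn_qr_mult[of x y p] sgn_qr_comm[of p x] sgn_qr_comm[of p y] sgn_qr_comm[of p "x*y"]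
    by (simp add: Jacobi_mult_left prime_odd_nat)
  finally show ?case .
qed

lemma Jacobi_recip:
  assumes "odd a" "odd b"
  shows "Jacobi (int a) (int b) = sgn_qr a b * Jacobi (int b) (int a)"
  using assms(1)
proof (induction a rule: odd_induct)
  case one then show ?case using assms by (simp add: Jacobi_one_left sgn_qr_def)
next
  case (prime p) then show ?case using assms Jacobi_recip_prime[of p b] by simp
next
  case (mult x y)
  have "Jacobi (int (x*y)) (int b) = Jacobi (int x) (int b) * Jacobi (int y) (int b)"
    using mult assms by (simp add: Jacobi_mult_left)
  also have "\<dots> = sgn_qr x b * sgn_qr y b * (Jacobi (int b) (int x) * Jacobi (int b) (int y))"
    using mult by simp
  also have "\<dots> = sgn_qr (x*y) b * Jacobi (int b) (int (x*y))"
    using mult assms sgn_qr_mult[of x y b]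
    by (simp add: Jacobi_mult_right)
  finally show ?case .
qed



lemma recur_inv:
  fixes m N x' K :: nat and xminv :: int and z :: "nat \<Rightarrow> int"
  assumes inv: "[int x' * xminv = 1] (mod 2 ^ m)" and xl: "x' < 2 ^ m" and z0: "z 0 = 0"
    and rec: "\<forall>j. j < K \<longrightarrow>
           z (Suc j) = (z j + ((xminv * (int ((N div 2 ^ (j * m)) mod 2 ^ m) - z j)) mod 2 ^ m)
                                * int x') div 2 ^ m"
    and x0: "0 < x'"
  shows "j \<le> K \<Longrightarrow> 0 \<le> z j \<and> z j < int x' \<and> (\<exists>W. z j * 2^(j*m) = int x' * W - int (N mod 2^(j*m)))"
proof (induction j)
  case 0 then show ?case using z0 x0 by simp
next
  case (Suc j)
  then have jK: "j < K" by simp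
  with Suc.IH obtain W where z0': "0 \<le> z j" and zx: "z j < int x'"
    and W: "z j * 2^(j*m) = int x' * W - int (N mod 2^(j*m))" by auto
  define M :: int where "M = 2^m"
  define Nj :: int where "Nj = int ((N div 2 ^ (j * m)) mod 2 ^ m)"
  define c where "c = (xminv * (Nj - z j)) mod M"
  define a where "a = z j + c * int x'"
  have zS: "z (Suc j) = a div M" using rec jK unfolding a_def c_def Nj_def M_def by simp
  have M0: "M > 0" unfolding M_def by simp
  have Nj: "0 \<le> Nj" "Nj < M" unfolding Nj_def M_def by (simp_all add: of_nat_mod)
  have c: "0 \<le> c" "c < M" unfolding c_def using M0 by simp_all
  have "[c * int x' = xminv * (Nj - z j) * int x'] (mod M)"
    unfolding c_def by (simp add: cong_def mod_mult_left_eq)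
  moreover have "[xminv * (Nj - z j) * int x' = (int x' * xminv) * (Nj - z j)] (mod M)"
    by (simp add: algebra_simps)
  moreover have "[(int x' * xminv) * (Nj - z j) = 1 * (Nj - z j)] (mod M)"
    using inv unfolding M_def by (intro cong_mult cong_refl) simp
  ultimately have "[c * int x' = Nj - z j] (mod M)" by (metis cong_trans mult_1)
  then have "[a = z j + (Nj - z j)] (mod M)" unfolding a_def by (intro cong_add cong_refl)
  then have "a mod M = Nj" using Nj by (simp add: cong_def)
  then have aM: "a = M * (a div M) + Nj" by (metis div_mult_mod_eq mult.commute)
  have a0: "0 \<le> a" unfolding a_def using z0' c by simp
  have "c * int x' \<le> (M - 1) * int x'" using c by (intro mult_right_mono) auto
  then have "a < M * int x'" unfolding a_def using zx by (simp add: algebra_simps)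
  then have adiv: "a div M < int x'" using M0 by (smt (verit) minus_mod_eq_mult_div mult_left_less_imp_less pos_mod_sign)
  have q0: "0 \<le> a div M" using a0 M0 by (simp add: pos_imp_zdiv_nonneg_iff)
  have e: "(2::nat)^(Suc j * m) = 2^(j*m) * 2^m" by (simp add: power_add)
  have "N mod 2^(Suc j * m) = 2^(j*m) * (N div 2^(j*m) mod 2^m) + N mod 2^(j*m)"
    unfolding e by (rule mod_mult2_eq)
  then have "int (N mod 2^(Suc j * m)) = int (2^(j*m) * (N div 2^(j*m) mod 2^m) + N mod 2^(j*m))"
    by (rule arg_cong)
  then have Nmod: "int (N mod 2^(Suc j * m)) = 2^(j*m) * Nj + int (N mod 2^(j*m))"
    unfolding Nj_def by (simp only: of_nat_add of_nat_mult of_nat_power of_nat_numeral)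
  have "z (Suc j) * 2^(Suc j * m) = (a div M) * M * 2^(j*m)"
    unfolding zS M_def by (simp add: power_add mult.commute[of m])
  also have "\<dots> = (a - Nj) * 2^(j*m)"
  proof -
    have d: "(a div M) * M = a - Nj" by (metis aM add_diff_cancel_right' mult.commute)
    show ?thesis by (simp only: d)
  qed
  also have "\<dots> = int x' * (W + c * 2^(j*m)) - int (N mod 2^(Suc j * m))"
    unfolding Nmod a_def using W by (simp add: algebra_simps)
  finally have "\<exists>W. z (Suc j) * 2^(Suc j * m) = int x' * W - int (N mod 2^(Suc j * m))" by blast
  then show ?case using q0 adiv zS by simp
qed

theorem lemma4p5:
  fixes m n N x t x' :: nat and xminv :: int and z :: "nat \<Rightarrow> int"
  assumes "0 < m" and "0 < n" and "m dvd n"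
    and "odd N" and "0 < N" and "N < 2 ^ n"
    and "0 < x" and "x < 2 ^ m"
    and "x = 2 ^ t * x'" and "odd x'"
    and "[int x' * xminv = 1] (mod 2 ^ m)"
    and "z 0 = 0"
    and "\<forall>j. j < n div m - 1 \<longrightarrow>
           z (Suc j) = (z j + ((xminv * (int ((N div 2 ^ (j * m)) mod 2 ^ m) - z j)) mod 2 ^ m)
                                * int x') div 2 ^ m"
  shows "let s = int (N div 2 ^ (n - m)) - z (n div m - 1) in
         ((-1) ^ ((N\<^sup>2 - 1) div 8)) ^ t * (-1) ^ (((x' - 1) * (N - 1)) div 4)
           * ((-1) ^ ((x'\<^sup>2 - 1) div 8)) ^ (n - m) * Jacobi s (int x')
           = Jacobi (int x) (int N)
         \<and> \<bar>s\<bar> < 2 ^ m"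
proof -
  define K where "K = n div m - 1"
  define s where "s = int (N div 2 ^ (n - m)) - z K"
  obtain k where nk: "n = m * k" using assms(3) by blast
  have k1: "k \<ge> 1" using nk assms(2) by (cases k) auto
  have "K = k - 1" unfolding K_def nk using assms(1) by simp
  then have "K * m = k * m - 1 * m" by (simp add: diff_mult_distrib)
  then have Km: "K * m = n - m" unfolding nk by (simp add: mult.commute)
  have x0: "0 < x'" using assms(10) by (cases x') auto
  have "x' \<le> x" using assms(9) by simp
  then have xl: "x' < 2^m" using assms(8) by simp
  have inv: "0 \<le> z K \<and> z K < int x' \<and> (\<exists>W. z K * 2^(K*m) = int x' * W - int (N mod 2^(K*m)))"
  proof -
    have rec': "\<forall>j. j < K \<longrightarrow>
           z (Suc j) = (z j + ((xminv * (int ((N div 2 ^ (j * m)) mod 2 ^ m) - z j)) mod 2 ^ m)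
                                * int x') div 2 ^ m" using assms(13) unfolding K_def .
    show ?thesis by (rule recur_inv[OF assms(11) xl assms(12) rec' x0 order_refl])
  qed
  then obtain W where W: "z K * 2^(n-m) = int x' * W - int (N mod 2^(n-m))" using Km by auto
  have "int N = int (N div 2^(n-m) * 2^(n-m) + N mod 2^(n-m))" by (simp only: div_mult_mod_eq)
  also have "\<dots> = int (N div 2^(n-m)) * 2^(n-m) + int (N mod 2^(n-m))"
    by (simp only: of_nat_add of_nat_mult of_nat_power of_nat_numeral)
  finally have Nd: "int N = int (N div 2^(n-m)) * 2^(n-m) + int (N mod 2^(n-m))" .
  have "s * 2^(n-m) = int (N div 2^(n-m)) * 2^(n-m) - z K * 2^(n-m)"
    unfolding s_def by (rule left_diff_distrib)
  then have sN: "int N - s * 2^(n-m) = int x' * W" using Nd W by linarith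
  then have cg: "[int N = s * 2^(n-m)] (mod int x')"
    by (simp add: cong_iff_dvd_diff)
  have "m \<le> n" using nk k1 by simp
  then have "(2::nat)^m * 2^(n-m) = 2^n" by (simp add: power_add[symmetric])
  then have "N < 2^m * 2^(n-m)" using assms(6) by simp
  then have "N div 2^(n-m) < 2^m" by (simp add: less_mult_imp_div_less)
  then have b1: "int (N div 2^(n-m)) < 2^m" by (metis of_nat_less_iff of_nat_numeral of_nat_power)
  have b2: "int x' < 2^m" using xl by (metis of_nat_less_iff of_nat_numeral of_nat_power)
  have b3: "0 \<le> int (N div 2^(n-m))" by simp
  have "s < 2^m" "- (2^m) < s" unfolding s_def using inv b1 b2 b3 by linarith+
  then have bound: "\<bar>s\<bar> < 2^m" by (simp only: abs_less_iff) simp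
  have J2N: "Jacobi 2 (int N) = (-1) ^ ((N\<^sup>2 - 1) div 8)" using Jacobi_two assms(4) by blast
  have J2x: "Jacobi 2 (int x') = (-1) ^ ((x'\<^sup>2 - 1) div 8)" using Jacobi_two assms(10) by blast
  have sg: "sgn_qr x' N = (-1) ^ (((x' - 1) * (N - 1)) div 4)"
  proof -
    obtain A where A: "x' = 2*A+1" using assms(10) oddE by blast
    obtain B where B: "N = 2*B+1" using assms(4) oddE by blast
    have "((x' - 1) * (N - 1)) div 4 = A * B" using A B by simp
    moreover have "(x' - 1) div 2 = A" "(N - 1) div 2 = B" using A B by simp_all
    ultimately show ?thesis unfolding sgn_qr_def by simp
  qed
  have "Jacobi (int x) (int N) = Jacobi (2^t * int x') (int N)" using assms(9) by simp
  also have "\<dots> = Jacobi 2 (int N) ^ t * Jacobi (int x') (int N)"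
    using assms(4) by (simp add: Jacobi_mult_left Jacobi_power_left)
  also have "Jacobi (int x') (int N) = sgn_qr x' N * Jacobi (int N) (int x')"
    using Jacobi_recip assms(4,10) by blast
  also have "Jacobi (int N) (int x') = Jacobi (s * 2^(n-m)) (int x')"
    using Jacobi_cong[OF assms(10) cg] .
  also have "\<dots> = Jacobi s (int x') * Jacobi 2 (int x') ^ (n-m)"
    using assms(10) by (simp add: Jacobi_mult_left Jacobi_power_left)
  finally have "Jacobi (int x) (int N) = ((-1) ^ ((N\<^sup>2 - 1) div 8)) ^ t * (-1) ^ (((x' - 1) * (N - 1)) div 4)
           * ((-1) ^ ((x'\<^sup>2 - 1) div 8)) ^ (n - m) * Jacobi s (int x')"
    unfolding J2N J2x sg by (simp add: algebra_simps)
  then show ?thesis using bound unfolding Let_def s_def K_def by simp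
qed

end
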